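(* $\mathrm{conv}\sqsubseteq\mathcal{BI}\sqsubseteq\mathrm{Fin}^2$, while $\mathcal{BI}\not\sqsubseteq\mathrm{conv}$ and $\mathrm{Fin}^2\not\sqsubseteq\mathcal{BI}$.
   Context: An ideal on an infinite countable set $X$ is a family $\mathcal{I}\subseteq\mathcal{P}(X)$ closed under subsets and finite unions, containing all finite subsets, with $X\notin\mathcal{I}$. $\mathrm{conv}$ is the ideal on $\mathbb{Q}\cap[0,1]$ generated by the ranges of sequences in $\mathbb{Q}\cap[0,1]$ that converge in $[0,1]$ (i.e., $A\in\mathrm{conv}$ iff $A$ is covered by finitely many such ranges). $\mathrm{Fin}^2$: ideal on $\omega^2$ of all $A$ with only finitely many $n$ such that $\{m:(n,m)\in A\}$ is infinite. $\mathcal{BI}$: ideal on $\omega^3$ of all $A$ for which there is $k$ with $\{(j,l):(i,j,l)\in A\}\in\mathrm{Fin}^2$ for $i<k$ and finite for $i\ge k$. $\mathcal{I}\sqsubseteq\mathcal{J}$: there is a bijection $f:\bigcup\mathcal{J}\to\bigcup\mathcal{I}$ with $f^{-1}[A]\in\mathcal{J}$ for all $A\in\mathcal{I}$. *)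

theory Defs
  imports Complex_Main
begin

definition ideal_below :: "'a set set \<Rightarrow> 'b set set \<Rightarrow> bool" where
  "ideal_below I J \<longleftrightarrow>
     (\<exists>f. bij_betw f (\<Union>J) (\<Union>I) \<and> (\<forall>A\<in>I. f -` A \<inter> \<Union>J \<in> J))"

definition Q01 :: "rat set" where
  "Q01 = {q. 0 \<le> q \<and> q \<le> 1}"

text \<open>conv: subsets of Q cap [0,1] covered by finitely many ranges of sequences
  in Q cap [0,1] converging in [0,1] (the limit lies in [0,1] automatically).\<close>
definition conv :: "rat set set" where
  "conv = {A. \<exists>F :: (nat \<Rightarrow> rat) set. finite F \<and>
       (\<forall>s\<in>F. range s \<subseteq> Q01 \<and> convergent (\<lambda>n. real_of_rat (s n))) \<and>
       A \<subseteq> \<Union>(range ` F)}"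

definition Fin2 :: "(nat \<times> nat) set set" where
  "Fin2 = {A. finite {n. infinite {m. (n, m) \<in> A}}}"

definition BI :: "(nat \<times> nat \<times> nat) set set" where
  "BI = {A. \<exists>k. (\<forall>i<k. {(j, l). (i, j, l) \<in> A} \<in> Fin2) \<and>
                 (\<forall>i\<ge>k. finite {(j, l). (i, j, l) \<in> A})}"

end

theory Submission
  imports Defs "HOL-Library.Countable_Set" "HOL-Library.Nat_Bijection"
begin


definition lo :: "rat \<Rightarrow> rat \<Rightarrow> nat \<Rightarrow> rat" where
  "lo c d j = c + (d - c) / (of_nat j + 2)"
definition hi :: "rat \<Rightarrow> rat \<Rightarrow> nat \<Rightarrow> rat" where
  "hi c d j = c + (d - c) / (of_nat j + 1)"
definition idx :: "rat \<Rightarrow> rat \<Rightarrow> rat \<Rightarrow> nat" where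
  "idx c d q = nat (floor ((d - c) / (q - c))) - 1"
definition PI :: "rat \<Rightarrow> rat \<Rightarrow> nat \<Rightarrow> rat set" where
  "PI c d j = {q. lo c d j < q \<and> q \<le> hi c d j}"

lemma lo_hi: "c < d \<Longrightarrow> c < lo c d j \<and> lo c d j < hi c d j \<and> hi c d j \<le> d"
  unfolding lo_def hi_def by (auto simp: field_simps intro: mult_right_mono)

lemma PI_sub: "c < d \<Longrightarrow> q \<in> PI c d j \<Longrightarrow> c < q \<and> q \<le> d"
  using lo_hi[of c d j] unfolding PI_def by auto

lemma PI_inf: "c < d \<Longrightarrow> infinite (PI c d j)"
proof -
  assume "c < d"
  then have "PI c d j = {lo c d j<..hi c d j}" unfolding PI_def by auto
  then show ?thesis using lo_hi[OF \<open>c<d\<close>, of j] by simp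
qed

lemma idx_iff:
  assumes cd: "c < d" and q: "c < q" "q \<le> d"
  shows "idx c d q = j \<longleftrightarrow> q \<in> PI c d j"
proof -
  define r where "r = (d - c) / (q - c)"
  have qc: "q - c > 0" using q by simp
  have r1: "r \<ge> 1" unfolding r_def using qc q by (simp add: field_simps)
  have a: "lo c d j < q \<longleftrightarrow> r < of_nat j + 2"
  proof -
    have "lo c d j < q \<longleftrightarrow> (d - c) / (of_nat j + 2) < q - c" unfolding lo_def by auto
    also have "\<dots> \<longleftrightarrow> d - c < (q - c) * (of_nat j + 2)"
      by (simp add: divide_less_eq add_pos_pos mult.commute)
    also have "\<dots> \<longleftrightarrow> r < of_nat j + 2" unfolding r_def using qc
      by (simp add: divide_less_eq mult.commute)
    finally show ?thesis .
  qed
  have b: "q \<le> hi c d j \<longleftrightarrow> of_nat j + 1 \<le> r"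
  proof -
    have "q \<le> hi c d j \<longleftrightarrow> q - c \<le> (d - c) / (of_nat j + 1)" unfolding hi_def by auto
    also have "\<dots> \<longleftrightarrow> (q - c) * (of_nat j + 1) \<le> d - c"
      by (simp add: le_divide_eq add_pos_pos)
    also have "\<dots> \<longleftrightarrow> of_nat j + 1 \<le> r" unfolding r_def using qc
      by (simp add: le_divide_eq mult.commute)
    finally show ?thesis .
  qed
  have fl: "floor r \<ge> 1" using r1 by simp
  have "idx c d q = j \<longleftrightarrow> floor r = int j + 1"
    unfolding idx_def r_def[symmetric] using fl by linarith
  also have "\<dots> \<longleftrightarrow> of_int (int j + 1) \<le> r \<and> r < of_int (int j + 1) + 1"
    by (rule floor_eq_iff)
  also have "\<dots> \<longleftrightarrow> q \<in> PI c d j" unfolding PI_def using a b by auto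
  finally show ?thesis .
qed

lemma fin_closed:
  fixes c e x :: real
  assumes "e > 0"
  shows "finite {j::nat. c + e / (real j + 2) \<le> x \<and> x \<le> c + e / (real j + 1)}"
proof (cases "x > c")
  case True
  have "{j::nat. c + e / (real j + 2) \<le> x \<and> x \<le> c + e / (real j + 1)} \<subseteq> {j. real j \<le> e / (x - c)}"
  proof safe
    fix j :: nat assume "x \<le> c + e / (real j + 1)"
    then have "x - c \<le> e / (real j + 1)" by simp
    then have "(x - c) * (real j + 1) \<le> e" by (simp add: le_divide_eq add_pos_pos)
    then have "real j * (x - c) \<le> e" using True by (simp add: algebra_simps)
    then show "real j \<le> e / (x - c)" using True by (simp add: le_divide_eq)
  qed
  moreover have "finite {j::nat. real j \<le> e / (x - c)}"
  proof -
    have "{j::nat. real j \<le> e / (x - c)} \<subseteq> {..nat (ceiling (e / (x - c)))}"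
    proof
      fix j assume "j \<in> {j::nat. real j \<le> e / (x - c)}"
      then have "real j \<le> of_int (ceiling (e / (x - c)))" using le_of_int_ceiling[of "e / (x - c)"] by simp linarith
      then have "int j \<le> ceiling (e / (x - c))" by linarith
      then show "j \<in> {..nat (ceiling (e / (x - c)))}" by auto
    qed
    then show ?thesis using finite_subset by blast
  qed
  ultimately show ?thesis using finite_subset by blast
next
  case False
  have "{j::nat. c + e / (real j + 2) \<le> x \<and> x \<le> c + e / (real j + 1)} = {}"
    using False assms by (auto simp: add_pos_pos) (smt (verit) divide_pos_pos of_nat_0_le_iff)
  then show ?thesis by (metis finite.emptyI)
qed

lemma fin_closed_rat:
  assumes "c < d"
  shows "finite {j. real_of_rat (lo c d j) \<le> x \<and> x \<le> real_of_rat (hi c d j)}"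
proof -
  have e: "real_of_rat d - real_of_rat c > 0" using assms by (simp add: of_rat_less)
  have "\<And>j. real_of_rat (lo c d j) = real_of_rat c + (real_of_rat d - real_of_rat c) / (real j + 2)"
       "\<And>j. real_of_rat (hi c d j) = real_of_rat c + (real_of_rat d - real_of_rat c) / (real j + 1)"
    unfolding lo_def hi_def by (simp_all add: of_rat_add of_rat_diff of_rat_divide)
  then show ?thesis using fin_closed[OF e, of "real_of_rat c" x] by simp
qed

lemma convE:
  assumes "A \<in> conv"
  obtains F :: "(nat \<Rightarrow> rat) set" where "finite F" "\<And>s. s \<in> F \<Longrightarrow> range s \<subseteq> Q01"
    "\<And>s. s \<in> F \<Longrightarrow> convergent (\<lambda>n. real_of_rat (s n))" "A \<subseteq> \<Union>(range ` F)"
proof -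
  from assms obtain F :: "(nat \<Rightarrow> rat) set" where "finite F \<and>
       (\<forall>s\<in>F. range s \<subseteq> Q01 \<and> convergent (\<lambda>n. real_of_rat (s n))) \<and>
       A \<subseteq> \<Union>(range ` F)" unfolding conv_def mem_Collect_eq by (elim exE)
  then show ?thesis using that by metis
qed
lemma convI:
  assumes "finite F" "\<And>s. s \<in> F \<Longrightarrow> range s \<subseteq> Q01"
    "\<And>s. s \<in> F \<Longrightarrow> convergent (\<lambda>n. real_of_rat (s n))" "A \<subseteq> \<Union>(range ` F)"
  shows "A \<in> conv"
  unfolding conv_def mem_Collect_eq using assms by (intro exI[of _ F]) simp

lemma lim_bounds:
  assumes cv: "convergent (\<lambda>n. real_of_rat (s n))" and inf: "infinite {n. P n}"
    and bd: "\<And>n. P n \<Longrightarrow> a \<le> real_of_rat (s n) \<and> real_of_rat (s n) \<le> b"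
  shows "a \<le> lim (\<lambda>n. real_of_rat (s n)) \<and> lim (\<lambda>n. real_of_rat (s n)) \<le> b"
proof -
  define L where "L = lim (\<lambda>n. real_of_rat (s n))"
  have t: "(\<lambda>n. real_of_rat (s n)) \<longlonglongrightarrow> L" using cv unfolding L_def
    by (simp add: convergent_LIMSEQ_iff)
  have "a \<le> L"
  proof (rule ccontr)
    assume "\<not> a \<le> L"
    then have "L < a" by simp
    from order_tendstoD(2)[OF t this] obtain N where N: "\<And>n. n \<ge> N \<Longrightarrow> real_of_rat (s n) < a"
      by (auto simp: eventually_sequentially)
    have "{n. P n} \<subseteq> {..<N}" using N bd by (metis lessThan_iff linorder_not_le mem_Collect_eq subsetI)
    then show False using inf finite_subset by blast
  qed
  moreover have "L \<le> b"
  proof (rule ccontr)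
    assume "\<not> L \<le> b"
    then have "b < L" by simp
    from order_tendstoD(1)[OF t this] obtain N where N: "\<And>n. n \<ge> N \<Longrightarrow> b < real_of_rat (s n)"
      by (auto simp: eventually_sequentially)
    have "{n. P n} \<subseteq> {..<N}" using N bd by (metis lessThan_iff linorder_not_le mem_Collect_eq subsetI)
    then show False using inf finite_subset by blast
  qed
  ultimately show ?thesis unfolding L_def by simp
qed

lemma G:
  fixes T :: "'w \<Rightarrow> rat set" and l h :: "'w \<Rightarrow> rat"
  assumes A: "A \<in> conv"
    and bd: "\<And>w q. q \<in> T w \<Longrightarrow> q \<noteq> 0 \<Longrightarrow> l w \<le> q \<and> q \<le> h w"
    and fin: "\<And>x. finite {w. real_of_rat (l w) \<le> x \<and> x \<le> real_of_rat (h w)}"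
  shows "finite {w. infinite (A \<inter> T w)}"
proof -
  obtain F :: "(nat \<Rightarrow> rat) set" where F0: "finite F"
    "\<And>s. s \<in> F \<Longrightarrow> range s \<subseteq> Q01" "\<And>s. s \<in> F \<Longrightarrow> convergent (\<lambda>n. real_of_rat (s n))"
    "A \<subseteq> \<Union>(range ` F)"
    using convE[OF A] by blast
  have F: "finite F" "\<And>s. s \<in> F \<Longrightarrow> range s \<subseteq> Q01 \<and> convergent (\<lambda>n. real_of_rat (s n))"
    "A \<subseteq> \<Union>(range ` F)" using F0 by auto
  define Lm where "Lm s = lim (\<lambda>n. real_of_rat (s n))" for s :: "nat \<Rightarrow> rat"
  have key: "\<exists>s\<in>F. real_of_rat (l w) \<le> Lm s \<and> Lm s \<le> real_of_rat (h w)"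
    if inf: "infinite (A \<inter> T w)" for w
  proof -
    have "infinite (A \<inter> T w - {0})" using inf by simp
    moreover have "A \<inter> T w - {0} \<subseteq> (\<Union>s\<in>F. s ` {n. s n \<in> T w - {0}})"
      using F(3) by fastforce
    ultimately have "infinite (\<Union>s\<in>F. s ` {n. s n \<in> T w - {0}})" using finite_subset by blast
    then obtain s where s: "s \<in> F" "infinite (s ` {n. s n \<in> T w - {0}})" using F(1) by blast
    then have "infinite {n. s n \<in> T w - {0}}" by blast
    from lim_bounds[OF conjunct2[OF F(2)[OF s(1)]] this, of "real_of_rat (l w)" "real_of_rat (h w)"]
    have "real_of_rat (l w) \<le> Lm s \<and> Lm s \<le> real_of_rat (h w)"
      unfolding Lm_def using bd by (simp add: of_rat_less_eq)
    then show ?thesis using s(1) by blast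
  qed
  have "{w. infinite (A \<inter> T w)} \<subseteq> (\<Union>s\<in>F. {w. real_of_rat (l w) \<le> Lm s \<and> Lm s \<le> real_of_rat (h w)})"
    using key by blast
  moreover have "finite (\<Union>s\<in>F. {w. real_of_rat (l w) \<le> Lm s \<and> Lm s \<le> real_of_rat (h w)})"
    using F(1) fin by blast
  ultimately show ?thesis using finite_subset by blast
qed

lemma PI_avoid:
  assumes "a < b" "Z \<in> conv"
  shows "\<exists>q. a < q \<and> q \<le> b \<and> q \<notin> Z"
proof -
  have "finite {j. infinite (Z \<inter> PI a b j)}"
    by (rule G[OF assms(2), of "PI a b" "lo a b" "hi a b"])
      (auto simp: PI_def fin_closed_rat[OF assms(1)])
  then obtain j where "\<not> infinite (Z \<inter> PI a b j)"
    using ex_new_if_finite[OF infinite_UNIV_nat] by blast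
  then have fz: "finite (Z \<inter> PI a b j)" by simp
  have "\<exists>q. q \<in> PI a b j \<and> q \<notin> Z"
  proof (rule ccontr)
    assume "\<not> ?thesis"
    then have "PI a b j \<subseteq> Z \<inter> PI a b j" by blast
    then show False using fz PI_inf[OF assms(1), of j] finite_subset by blast
  qed
  then show ?thesis using PI_sub[OF assms(1)] by blast
qed

lemma Hcontra:
  fixes b :: "nat \<Rightarrow> nat \<Rightarrow> rat" and mu :: "rat \<Rightarrow> nat" and T :: "nat \<Rightarrow> rat set"
  assumes B: "{b m t | m t. t \<le> m} \<in> conv"
    and mem: "\<And>m t. b m t \<in> T t" and unb: "\<And>m t. mu (b m t) \<ge> m"
    and bd: "\<And>w q. q \<in> T w \<Longrightarrow> q \<noteq> 0 \<Longrightarrow> l w \<le> q \<and> q \<le> h w"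
    and fin: "\<And>x. finite {w. real_of_rat (l w) \<le> x \<and> x \<le> real_of_rat (h w)}"
  shows False
proof -
  let ?B = "{b m t | m t. t \<le> m}"
  have f: "finite {t. infinite (?B \<inter> T t)}" by (rule G[OF B bd fin])
  have "infinite (?B \<inter> T t)" for t
  proof
    assume fi: "finite (?B \<inter> T t)"
    then have "finite (mu ` (?B \<inter> T t))" by simp
    then obtain N where "mu ` (?B \<inter> T t) \<subseteq> {..<N}"
      using finite_nat_bounded by blast
    then have N: "\<And>x. x \<in> ?B \<inter> T t \<Longrightarrow> mu x < N" by blast
    have "b (max N t) t \<in> ?B" by (metis (mono_tags, lifting) max.cobounded2 mem_Collect_eq)
    then have "b (max N t) t \<in> ?B \<inter> T t" using mem by auto
    then have "mu (b (max N t) t) < N" by (rule N)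
    moreover have "mu (b (max N t) t) \<ge> max N t" by (rule unb)
    ultimately show False by simp
  qed
  then have "{t. infinite (?B \<inter> T t)} = UNIV" by blast
  then show False using f by simp
qed



definition II :: "rat \<Rightarrow> nat" where "II q = idx 0 1 q"
definition JJ :: "rat \<Rightarrow> nat" where "JJ q = idx (lo 0 1 (II q)) (hi 0 1 (II q)) q"
definition CC :: "nat \<Rightarrow> nat \<Rightarrow> rat set" where "CC i j = {q \<in> Q01. II q = i \<and> JJ q = j}"
definition SS :: "nat \<Rightarrow> rat set" where "SS i = {q \<in> Q01. II q = i}"

lemma Q01_PI: "q \<in> Q01 \<Longrightarrow> q \<noteq> 0 \<Longrightarrow> q \<in> PI 0 1 (II q)"
  unfolding II_def Q01_def using idx_iff[of 0 1 q "idx 0 1 q"] by auto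

lemma PI_II: "q \<in> PI 0 1 i \<Longrightarrow> II q = i \<and> q \<in> Q01"
  unfolding II_def Q01_def using idx_iff[of 0 1 q i] PI_sub[of 0 1 q i] by auto

lemma SS_bd: "q \<in> SS i \<Longrightarrow> q \<noteq> 0 \<Longrightarrow> q \<in> PI 0 1 i"
  unfolding SS_def using Q01_PI by auto

lemma CC_bd: "q \<in> CC i j \<Longrightarrow> q \<noteq> 0 \<Longrightarrow> q \<in> PI (lo 0 1 i) (hi 0 1 i) j"
proof -
  assume q: "q \<in> CC i j" "q \<noteq> 0"
  then have p: "q \<in> PI 0 1 i" and ii: "II q = i" and jj: "JJ q = j"
    using SS_bd[of q i] unfolding CC_def SS_def by auto
  have "lo 0 1 i < hi 0 1 i" using lo_hi[of 0 1 i] by simp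
  moreover have "lo 0 1 i < q" "q \<le> hi 0 1 i" using p unfolding PI_def by auto
  ultimately show ?thesis using idx_iff[of "lo 0 1 i" "hi 0 1 i" q j] jj ii unfolding JJ_def by auto
qed

lemma PI_CC: "PI (lo 0 1 i) (hi 0 1 i) j \<subseteq> CC i j"
proof
  fix q assume q: "q \<in> PI (lo 0 1 i) (hi 0 1 i) j"
  have lh: "lo 0 1 i < hi 0 1 i" using lo_hi[of 0 1 i] by simp
  have b: "lo 0 1 i < q" "q \<le> hi 0 1 i" using PI_sub[OF lh q] by auto
  then have "q \<in> PI 0 1 i" unfolding PI_def by auto
  then have ii: "II q = i" and qq: "q \<in> Q01" using PI_II by auto
  have "JJ q = j" unfolding JJ_def ii using idx_iff[OF lh b] q by simp
  then show "q \<in> CC i j" unfolding CC_def using ii qq by auto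
qed

lemma CC_inf: "infinite (CC i j)"
  using PI_inf[of "lo 0 1 i" "hi 0 1 i" j] lo_hi[of 0 1 i] PI_CC[of i j] finite_subset by auto

definition ee :: "nat \<Rightarrow> nat \<Rightarrow> nat \<Rightarrow> rat" where "ee i j = from_nat_into (CC i j)"

lemma ee_bij: "bij_betw (ee i j) UNIV (CC i j)"
  unfolding ee_def by (rule bij_betw_from_nat_into[OF countableI_type CC_inf])

definition ff :: "nat \<times> nat \<times> nat \<Rightarrow> rat" where "ff x = (case x of (i, j, l) \<Rightarrow> ee i j l)"

lemma ee_CC: "ee i j l \<in> CC i j" using ee_bij[of i j] bij_betwE by blast

lemma ff_bij: "bij_betw ff UNIV Q01"
  unfolding bij_betw_def
proof
  show "inj ff"
  proof (rule injI)
    fix x y assume e: "ff x = ff y"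
    obtain i j l where x: "x = (i, j, l)" by (cases x) auto
    obtain i' j' l' where y: "y = (i', j', l')" by (cases y) auto
    have "ee i j l = ee i' j' l'" using e x y by (simp add: ff_def)
    moreover have "ee i j l \<in> CC i j" "ee i' j' l' \<in> CC i' j'" by (rule ee_CC)+
    ultimately have ij: "i = i'" "j = j'" unfolding CC_def by auto
    then have "ee i j l = ee i j l'" using \<open>ee i j l = ee i' j' l'\<close> by simp
    then have "l = l'" using ee_bij[of i j] unfolding bij_betw_def inj_def by blast
    then show "x = y" using x y ij by simp
  qed
  show "range ff = Q01"
  proof
    show "range ff \<subseteq> Q01" using ee_CC unfolding ff_def CC_def by auto
    show "Q01 \<subseteq> range ff"
    proof
      fix q assume q: "q \<in> Q01"
      then have "q \<in> CC (II q) (JJ q)" unfolding CC_def by simp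
      then obtain l where "ee (II q) (JJ q) l = q" using ee_bij[of "II q" "JJ q"]
        unfolding bij_betw_def by (metis imageE)
      then show "q \<in> range ff" unfolding ff_def by (metis case_prod_conv rangeI)
    qed
  qed
qed

lemma conv_mono: "A \<in> conv \<Longrightarrow> B \<subseteq> A \<Longrightarrow> B \<in> conv"
  by (erule convE, rule convI) auto

lemma Union_conv: "\<Union>conv = Q01"
proof
  show "\<Union>conv \<subseteq> Q01"
  proof
    fix x assume "x \<in> \<Union>conv"
    then obtain A where "x \<in> A" "A \<in> conv" by blast
    then obtain F :: "(nat \<Rightarrow> rat) set" where "\<And>s. s \<in> F \<Longrightarrow> range s \<subseteq> Q01" "A \<subseteq> \<Union>(range ` F)"
      by (metis convE)
    then show "x \<in> Q01" using \<open>x \<in> A\<close> by blast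
  qed
  show "Q01 \<subseteq> \<Union>conv"
  proof
    fix q assume q: "q \<in> Q01"
    have "finite {\<lambda>n::nat. q}" by simp
    moreover have "\<forall>s\<in>{\<lambda>n::nat. q}. range s \<subseteq> Q01 \<and> convergent (\<lambda>n. real_of_rat (s n))"
      using q by (simp add: convergent_const)
    moreover have "{q} \<subseteq> \<Union>(range ` {\<lambda>n::nat. q})" by simp
    ultimately have "{q} \<in> conv" by (intro convI[of "{\<lambda>n::nat. q}"]) auto
    then show "q \<in> \<Union>conv" by blast
  qed
qed

lemma Union_BI: "\<Union>BI = UNIV"
proof -
  have "{x} \<in> BI" for x :: "nat \<times> nat \<times> nat"
  proof -
    have "finite {(j, l). (i, j, l) \<in> {x}}" for i
    proof -
      have "{(j, l). (i, j, l) \<in> {x}} \<subseteq> {snd x}" by auto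
      then show ?thesis using finite_subset by blast
    qed
    then have "(\<forall>i<0. {(j, l). (i, j, l) \<in> {x}} \<in> Fin2) \<and> (\<forall>i\<ge>0. finite {(j, l). (i, j, l) \<in> {x}})"
      by simp
    then show ?thesis unfolding BI_def by (intro CollectI exI)
  qed
  then show ?thesis by auto
qed

lemma Union_Fin2: "\<Union>Fin2 = UNIV"
proof -
  have "{x} \<in> Fin2" for x :: "nat \<times> nat"
  proof -
    have "{n. infinite {m. (n, m) \<in> {x}}} = {}"
    proof -
      have "finite {m. (n, m) \<in> {x}}" for n
      proof -
        have "{m. (n, m) \<in> {x}} \<subseteq> {snd x}" by auto
        then show ?thesis using finite_subset by blast
      qed
      then show ?thesis by blast
    qed
    then show ?thesis unfolding Fin2_def by simp
  qed
  then show ?thesis by auto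
qed

lemma part1: "ideal_below conv BI"
  unfolding ideal_below_def Union_conv Union_BI
proof (intro exI conjI ballI)
  show "bij_betw ff UNIV Q01" by (rule ff_bij)
  fix A assume A: "A \<in> conv"
  have f1: "finite {i. infinite (A \<inter> SS i)}"
    by (rule G[OF A, of SS "lo 0 1" "hi 0 1"]) (auto dest: SS_bd simp: PI_def fin_closed_rat)
  have f2: "finite {j. infinite (A \<inter> CC i j)}" for i
  proof -
    have lh: "lo 0 1 i < hi 0 1 i" using lo_hi[of 0 1 i] by simp
    show ?thesis
      by (rule G[OF A, of "CC i" "lo (lo 0 1 i) (hi 0 1 i)" "hi (lo 0 1 i) (hi 0 1 i)"])
        (auto dest: CC_bd simp: PI_def fin_closed_rat[OF lh])
  qed
  obtain k where k: "{i. infinite (A \<inter> SS i)} \<subseteq> {..<k}" using finite_nat_bounded[OF f1] by blast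
  have sl: "{(j, l). (i, j, l) \<in> ff -` A \<inter> UNIV} = {(j, l). ee i j l \<in> A}" for i
    by (auto simp: ff_def)
  have injee: "inj (ee i j)" for i j using ee_bij[of i j] by (simp add: bij_betw_def)
  have fin2: "{(j, l). ee i j l \<in> A} \<in> Fin2" for i
  proof -
    have "{j. infinite {m. (j, m) \<in> {(j, l). ee i j l \<in> A}}} \<subseteq> {j. infinite (A \<inter> CC i j)}"
    proof safe
      fix j assume inf: "infinite {m. (j, m) \<in> {(j, l). ee i j l \<in> A}}" and fi: "finite (A \<inter> CC i j)"
      have "{m. (j, m) \<in> {(j, l). ee i j l \<in> A}} = ee i j -` (A \<inter> CC i j)"
        using ee_CC by auto
      then show False using inf finite_vimageI[OF fi injee] by simp
    qed
    then show ?thesis unfolding Fin2_def using f2[of i] finite_subset by blast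
  qed
  have injp: "inj (\<lambda>(j, l). ee i j l)" for i
  proof (rule injI)
    fix x y :: "nat \<times> nat" assume "(\<lambda>(j, l). ee i j l) x = (\<lambda>(j, l). ee i j l) y"
    then have "ff (i, x) = ff (i, y)" by (simp add: ff_def split: prod.splits)
    then show "x = y" using ff_bij unfolding bij_betw_def inj_def by blast
  qed
  have fin: "finite {(j, l). ee i j l \<in> A}" if "i \<ge> k" for i
  proof -
    have fa: "finite (A \<inter> SS i)" using k that by force
    have "{(j, l). ee i j l \<in> A} = (\<lambda>(j, l). ee i j l) -` (A \<inter> SS i)"
      using ee_CC unfolding CC_def SS_def by auto
    then show ?thesis using finite_vimageI[OF fa injp] by simp
  qed
  have "(\<forall>i<k. {(j, l). (i, j, l) \<in> ff -` A \<inter> UNIV} \<in> Fin2) \<and>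
    (\<forall>i\<ge>k. finite {(j, l). (i, j, l) \<in> ff -` A \<inter> UNIV})" unfolding sl using fin2 fin by blast
  then show "ff -` A \<inter> UNIV \<in> BI" unfolding BI_def by (intro CollectI exI)
qed

lemma part2: "ideal_below BI Fin2"
  unfolding ideal_below_def Union_BI Union_Fin2
proof (intro exI conjI ballI)
  define g where "g = (\<lambda>(n::nat, m::nat). (fst (prod_decode n), snd (prod_decode n), m))"
  show "bij_betw g UNIV UNIV" unfolding bij_betw_def
  proof
    show "inj g"
    proof (rule injI)
      fix x y assume e: "g x = g y"
      obtain n m where x: "x = (n, m)" by (cases x) auto
      obtain n' m' where y: "y = (n', m')" by (cases y) auto
      have "prod_decode n = prod_decode n'" "m = m'" using e x y unfolding g_def
        by (auto simp: prod_eq_iff)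
      then show "x = y" using x y inj_prod_decode unfolding inj_def by blast
    qed
    show "range g = UNIV"
    proof safe
      fix i j l :: nat
      have "g (prod_encode (i, j), l) = (i, j, l)" unfolding g_def by simp
      then show "(i, j, l) \<in> range g" by (metis rangeI)
    qed auto
  qed
  fix A assume "A \<in> BI"
  then obtain k where k1: "\<And>i. i < k \<Longrightarrow> {(j, l). (i, j, l) \<in> A} \<in> Fin2"
    and k2: "\<And>i. i \<ge> k \<Longrightarrow> finite {(j, l). (i, j, l) \<in> A}" unfolding BI_def by blast
  define Bad where "Bad i = {j. infinite {l. (i, j, l) \<in> A}}" for i
  have fb: "finite (Bad i)" if "i < k" for i
  proof -
    have "Bad i = {j. infinite {m. (j, m) \<in> {(j, l). (i, j, l) \<in> A}}}" unfolding Bad_def by simp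
    then show ?thesis using k1[OF that] unfolding Fin2_def by simp
  qed
  have "{n. infinite {m. (n, m) \<in> g -` A \<inter> UNIV}} \<subseteq> prod_encode ` (SIGMA i:{..<k}. Bad i)"
  proof
    fix n assume n: "n \<in> {n. infinite {m. (n, m) \<in> g -` A \<inter> UNIV}}"
    obtain i j where ij: "prod_decode n = (i, j)" by (cases "prod_decode n") auto
    have inf: "infinite {l. (i, j, l) \<in> A}" using n ij unfolding g_def by simp
    have "i < k"
    proof (rule ccontr)
      assume "\<not> i < k"
      then have "finite {(j, l). (i, j, l) \<in> A}" using k2 by simp
      then have "finite (Pair j -` {(j, l). (i, j, l) \<in> A})" by (rule finite_vimageI) (simp add: inj_def)
      then show False using inf by simp
    qed
    moreover have "j \<in> Bad i" using inf unfolding Bad_def by simp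
    moreover have "n = prod_encode (i, j)" using ij by (metis prod_decode_inverse)
    ultimately show "n \<in> prod_encode ` (SIGMA i:{..<k}. Bad i)" by blast
  qed
  moreover have "finite (prod_encode ` (SIGMA i:{..<k}. Bad i))" using fb by auto
  ultimately show "g -` A \<inter> UNIV \<in> Fin2" unfolding Fin2_def using finite_subset by blast
qed

lemma Fin2_I: "(\<And>j. finite {l. (j, l) \<in> S}) \<Longrightarrow> S \<in> Fin2"
  unfolding Fin2_def by simp

lemma BI_I:
  assumes "\<And>i. i < k \<Longrightarrow> {(j, l). (i, j, l) \<in> A} \<in> Fin2"
    and "\<And>i. i \<ge> k \<Longrightarrow> finite {(j, l). (i, j, l) \<in> A}"
  shows "A \<in> BI"
proof -
  have "(\<forall>i<k. {(j, l). (i, j, l) \<in> A} \<in> Fin2) \<and> (\<forall>i\<ge>k. finite {(j, l). (i, j, l) \<in> A})"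
    using assms by blast
  then show ?thesis unfolding BI_def by (intro CollectI exI)
qed

lemma BI_E:
  assumes "A \<in> BI"
  obtains k where "\<And>i. i < k \<Longrightarrow> {(j, l). (i, j, l) \<in> A} \<in> Fin2"
    "\<And>i. i \<ge> k \<Longrightarrow> finite {(j, l). (i, j, l) \<in> A}"
  using assms unfolding BI_def by blast

lemma slice_eq: "{(j, l). (i, j, l) \<in> A} = {x. (i, x) \<in> A}" by auto

lemma part4: "\<not> ideal_below Fin2 BI"
  unfolding ideal_below_def Union_BI Union_Fin2
proof
  assume "\<exists>f. bij_betw f UNIV UNIV \<and> (\<forall>A\<in>Fin2. f -` A \<inter> UNIV \<in> BI)"
  then obtain f :: "nat \<times> nat \<times> nat \<Rightarrow> nat \<times> nat" where H: "\<And>A. A \<in> Fin2 \<Longrightarrow> f -` A \<in> BI"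
    by auto
  show False
  proof (cases "\<exists>i n. \<forall>x. fst (f (i, x)) < n")
    case True
    then obtain i n where hn: "\<And>x. fst (f (i, x)) < n" by blast
    let ?A = "{p :: nat \<times> nat. fst p < n}"
    have "{m. infinite {l. (m, l) \<in> ?A}} \<subseteq> {..<n}" by auto
    then have "?A \<in> Fin2" unfolding Fin2_def using finite_subset by blast
    then obtain k where k1: "\<And>i. i < k \<Longrightarrow> {(j, l). (i, j, l) \<in> f -` ?A} \<in> Fin2"
      and k2: "\<And>i. i \<ge> k \<Longrightarrow> finite {(j, l). (i, j, l) \<in> f -` ?A}"
      using H BI_E by metis
    have u: "{(j, l). (i, j, l) \<in> f -` ?A} = UNIV" using hn by auto
    show False
    proof (cases "i < k")
      case True
      then have "UNIV \<in> Fin2" using k1 u by metis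
      then show False unfolding Fin2_def by simp
    next
      case False
      then have "finite (UNIV :: (nat \<times> nat) set)" using k2 u by (metis not_less)
      then show False by (simp add: finite_prod)
    qed
  next
    case False
    then have ex: "\<And>i n. \<exists>x. fst (f (i, x)) \<ge> n" by (meson not_less)
    define p where "p n i = (SOME x. fst (f (i, x)) \<ge> n)" for n i
    have pp: "fst (f (i, p n i)) \<ge> n" for n i unfolding p_def using ex by (rule someI_ex)
    define A where "A = {f (i, p n i) | n i. i \<le> n}"
    have "A \<in> Fin2"
    proof (rule Fin2_I)
      fix c
      have "{m. (c, m) \<in> A} \<subseteq> snd ` (\<lambda>(n, i). f (i, p n i)) ` ({..c} \<times> {..c})"
      proof
        fix m assume "m \<in> {m. (c, m) \<in> A}"
        then obtain n i where e: "(c, m) = f (i, p n i)" "i \<le> n" unfolding A_def by blast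
        then have "n \<le> c" using pp[of n i] by (metis fst_conv)
        then have "(n, i) \<in> {..c} \<times> {..c}" using e by auto
        then show "m \<in> snd ` (\<lambda>(n, i). f (i, p n i)) ` ({..c} \<times> {..c})"
          using e by (metis (no_types, lifting) case_prod_conv image_eqI snd_conv)
      qed
      then show "finite {m. (c, m) \<in> A}" using finite_subset by blast
    qed
    then obtain k where k2: "\<And>i. i \<ge> k \<Longrightarrow> finite {(j, l). (i, j, l) \<in> f -` A}"
      using H BI_E by metis
    have fk: "finite {x. (k, x) \<in> f -` A}" using k2[of k] unfolding slice_eq by simp
    then have "finite ((\<lambda>x. fst (f (k, x))) ` {x. (k, x) \<in> f -` A})" by simp
    then obtain N where N: "(\<lambda>x. fst (f (k, x))) ` {x. (k, x) \<in> f -` A} \<subseteq> {..<N}"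
      using finite_nat_bounded by blast
    have "f (k, p (max N k) k) \<in> A" unfolding A_def by (metis (mono_tags, lifting) max.cobounded2 mem_Collect_eq)
    then have "fst (f (k, p (max N k) k)) < N" using N by auto
    moreover have "fst (f (k, p (max N k) k)) \<ge> max N k" by (rule pp)
    ultimately show False by simp
  qed
qed


lemma part3: "\<not> ideal_below BI conv"
  unfolding ideal_below_def Union_BI Union_conv
proof
  assume "\<exists>f. bij_betw f Q01 UNIV \<and> (\<forall>A\<in>BI. f -` A \<inter> Q01 \<in> conv)"
  then obtain f :: "rat \<Rightarrow> nat \<times> nat \<times> nat" where H: "\<And>A. A \<in> BI \<Longrightarrow> f -` A \<inter> Q01 \<in> conv"
    by auto
  have imgconv: "B \<in> conv" if "B \<subseteq> Q01" "f ` B \<in> BI" for B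
    using conv_mono[OF H[OF that(2)]] that(1) by blast
  show False
  proof (cases "\<forall>n k. \<exists>q\<in>PI 0 1 k. fst (f q) \<ge> n")
    case True
    define b where "b m t = (SOME q. q \<in> PI 0 1 t \<and> fst (f q) \<ge> m)" for m t
    have bm: "b m t \<in> PI 0 1 t \<and> fst (f (b m t)) \<ge> m" for m t
    proof -
      have "\<exists>q. q \<in> PI 0 1 t \<and> fst (f q) \<ge> m" using True by blast
      then show ?thesis unfolding b_def by (rule someI_ex)
    qed
    let ?B = "{b m t | m t. t \<le> m}"
    have BQ: "?B \<subseteq> Q01"
    proof
      fix x assume "x \<in> ?B"
      then obtain m t where "x = b m t" by blast
      then show "x \<in> Q01" using bm[of m t] PI_II[of x t] by simp
    qed
    have "f ` ?B \<in> BI"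
    proof (rule BI_I[of 0])
      fix i :: nat
      have "{(j, l). (i, j, l) \<in> f ` ?B} \<subseteq> snd ` f ` (\<lambda>(m, t). b m t) ` ({..i} \<times> {..i})"
      proof
        fix x assume "x \<in> {(j, l). (i, j, l) \<in> f ` ?B}"
        then have "(i, x) \<in> f ` ?B" by (simp add: slice_eq)
        then obtain m t where e: "(i, x) = f (b m t)" "t \<le> m" by blast
        then have "m \<le> i" using bm[of m t] by (metis fst_conv)
        then have mt: "(m, t) \<in> {..i} \<times> {..i}" using e by auto
        have xe: "x = snd (f ((\<lambda>(m, t). b m t) (m, t)))" using e(1) by (metis snd_conv case_prod_conv)
        show "x \<in> snd ` f ` (\<lambda>(m, t). b m t) ` ({..i} \<times> {..i})"
          unfolding xe by (intro imageI) (rule mt)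
      qed
      then show "finite {(j, l). (i, j, l) \<in> f ` ?B}" by (rule finite_subset) simp
    qed simp
    then have "?B \<in> conv" using imgconv[OF BQ] by simp
    show False
      apply (rule Hcontra[OF \<open>?B \<in> conv\<close>, of "PI 0 1" "\<lambda>q. fst (f q)" "lo 0 1" "hi 0 1"])
      using bm apply blast
      using bm apply blast
      apply (auto simp: PI_def fin_closed_rat)
      done
  next
    case False
    then obtain n k where nk: "\<And>q. q \<in> PI 0 1 k \<Longrightarrow> fst (f q) < n" by (meson not_le)
    define c where "c = lo 0 1 k"
    define d where "d = hi 0 1 k"
    have cd: "c < d" unfolding c_def d_def using lo_hi[of 0 1 k] by simp
    have c0: "0 < c" unfolding c_def using lo_hi[of 0 1 k] by simp
    define Z where "Z m = f -` {x. fst x < n \<and> fst (snd x) < m} \<inter> Q01" for m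
    have Zc: "Z m \<in> conv" for m
    proof -
      have "{x :: nat \<times> nat \<times> nat. fst x < n \<and> fst (snd x) < m} \<in> BI"
      proof (rule BI_I[of n])
        fix i :: nat assume "i < n"
        show "{(j, l). (i, j, l) \<in> {x. fst x < n \<and> fst (snd x) < m}} \<in> Fin2"
          unfolding Fin2_def
        proof -
          have sub: "{j. infinite {ma. (j, ma) \<in> {(j, l). (i, j, l) \<in> {x. fst x < n \<and> fst (snd x) < m}}}} \<subseteq> {..<m}"
            by auto
          show "{(j, l). (i, j, l) \<in> {x. fst x < n \<and> fst (snd x) < m}} \<in>
              {A. finite {na. infinite {ma. (na, ma) \<in> A}}}" using finite_subset[OF sub] by simp
        qed
      next
        fix i :: nat assume "n \<le> i"
        then show "finite {(j, l). (i, j, l) \<in> {x. fst x < n \<and> fst (snd x) < m}}" by auto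
      qed
      then show ?thesis unfolding Z_def by (rule H)
    qed
    have inPI: "q \<in> Q01 \<and> fst (f q) < n" if "q \<in> PI c d t" for q t
    proof -
      have "q \<in> CC k t" using PI_CC[of k t] that unfolding c_def d_def by blast
      then have q: "q \<in> Q01" "II q = k" unfolding CC_def by auto
      have "q \<noteq> 0" using PI_sub[OF cd that] c0 by simp
      then have "q \<in> PI 0 1 k" using Q01_PI[OF q(1)] q(2) by simp
      then show ?thesis using nk q by blast
    qed
    have ex: "\<exists>q. q \<in> PI c d t \<and> q \<notin> Z m" for m t
    proof -
      have "lo c d t < hi c d t" using lo_hi[OF cd, of t] by simp
      from PI_avoid[OF this Zc[of m]] show ?thesis unfolding PI_def by blast
    qed
    define b where "b m t = (SOME q. q \<in> PI c d t \<and> q \<notin> Z m)" for m t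
    have bm: "b m t \<in> PI c d t \<and> b m t \<notin> Z m" for m t
      unfolding b_def using ex by (rule someI_ex)
    have bn: "b m t \<in> Q01 \<and> fst (f (b m t)) < n" for m t using inPI bm by blast
    have bmu: "fst (snd (f (b m t))) \<ge> m" for m t
      using bm[of m t] bn[of m t] unfolding Z_def by auto
    let ?B = "{b m t | m t. t \<le> m}"
    have BQ: "?B \<subseteq> Q01"
    proof
      fix x assume "x \<in> ?B"
      then obtain m t where "x = b m t" by blast
      then show "x \<in> Q01" using bn[of m t] by simp
    qed
    have "f ` ?B \<in> BI"
    proof (rule BI_I[of n])
      fix i :: nat assume "i < n"
      show "{(j, l). (i, j, l) \<in> f ` ?B} \<in> Fin2"
      proof (rule Fin2_I)
        fix j
        have "{l. (j, l) \<in> {(j, l). (i, j, l) \<in> f ` ?B}} \<subseteq> (\<lambda>x. snd (snd x)) ` f ` (\<lambda>(m, t). b m t) ` ({..j} \<times> {..j})"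
        proof
          fix x assume "x \<in> {l. (j, l) \<in> {(j, l). (i, j, l) \<in> f ` ?B}}"
          then have "(i, j, x) \<in> f ` ?B" by simp
          then obtain m t where e: "(i, j, x) = f (b m t)" "t \<le> m" by blast
          then have "m \<le> j" using bmu[of m t] by (metis fst_conv snd_conv)
          then have mt: "(m, t) \<in> {..j} \<times> {..j}" using e by auto
          have xe: "x = snd (snd (f ((\<lambda>(m, t). b m t) (m, t))))" using e(1) by (metis snd_conv case_prod_conv)
          show "x \<in> (\<lambda>x. snd (snd x)) ` f ` (\<lambda>(m, t). b m t) ` ({..j} \<times> {..j})"
            unfolding xe by (intro imageI) (rule mt)
        qed
        then show "finite {l. (j, l) \<in> {(j, l). (i, j, l) \<in> f ` ?B}}" by (rule finite_subset) simp
      qed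
    next
      fix i :: nat assume "n \<le> i"
      have nin: "(i, y) \<notin> f ` ?B" for y
      proof
        assume "(i, y) \<in> f ` ?B"
        then obtain m t where "(i, y) = f (b m t)" by blast
        then have "fst (f (b m t)) = i" by (metis fst_conv)
        then show False using bn[of m t] \<open>n \<le> i\<close> by simp
      qed
      then have "{(j, l). (i, j, l) \<in> f ` ?B} = {}" by auto
      then show "finite {(j, l). (i, j, l) \<in> f ` ?B}" by simp
    qed
    then have "?B \<in> conv" using imgconv[OF BQ] by simp
    show False
      apply (rule Hcontra[OF \<open>?B \<in> conv\<close>, of "PI c d" "\<lambda>q. fst (snd (f q))" "lo c d" "hi c d"])
      using bm apply blast
      using bmu apply blast
      apply (auto simp: PI_def fin_closed_rat[OF cd])
      done
  qed
qed


theorem proposition4p6: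
  shows "ideal_below conv BI \<and> ideal_below BI Fin2 \<and>
         \<not> ideal_below BI conv \<and> \<not> ideal_below Fin2 BI"
  using part1 part2 part3 part4 by blast

end
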